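(* Let $\partial_1,\partial_2$ be nonzero homogeneous locally nilpotent derivations of fiber type on $A$. Then $\partial_1+\partial_2$ is locally nilpotent if and only if $[\partial_1,\partial_2]$ is locally nilpotent.
   Context: Let $\mathbf k$ be an algebraically closed field of characteristic zero, $\mathbb T\cong(\mathbf k^\times)^n$ an algebraic torus with character lattice $M$. Let $X$ be a normal affine variety with an effective $\mathbb T$-action, $A=\mathbf k[X]$ with the induced $M$-grading $A=\bigoplus_{m\in M}A_m\chi^m$, $A_m\subseteq\mathbf k(X)^{\mathbb T}$, $K=\operatorname{Frac}A$. A derivation $\partial$ of $A$ is homogeneous of degree $e\in M$ if $\partial(A_m\chi^m)\subseteq A_{m+e}\chi^{m+e}$ for all $m$; it is locally nilpotent if every element of $A$ is killed by some power of $\partial$; a homogeneous locally nilpotent derivation is of fiber type if its unique extension to $K$ annihilates $\mathbf k(X)^{\mathbb T}$. *)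

theory Defs
  imports "HOL-Analysis.Finite_Cartesian_Product" "HOL-Computational_Algebra.Polynomial"
begin

text \<open>Setting: everything lives inside an ambient field 'a of characteristic zero.
  k is a subfield (the base field), A a subring (the coordinate ring), graded by the
  lattice M = int^'n via the family of homogeneous pieces G m (= A_m chi^m).\<close>

definition subfield :: "'a::field set \<Rightarrow> bool" where
  "subfield k \<longleftrightarrow> 0 \<in> k \<and> 1 \<in> k \<and> (\<forall>x\<in>k. \<forall>y\<in>k. x + y \<in> k \<and> x * y \<in> k)
     \<and> (\<forall>x\<in>k. - x \<in> k \<and> inverse x \<in> k)"

definition alg_closed_in :: "'a::field set \<Rightarrow> bool" where
  "alg_closed_in k \<longleftrightarrow> (\<forall>p::'a poly. (\<forall>i. coeff p i \<in> k) \<and> degree p \<ge> 1 \<longrightarrow> (\<exists>x\<in>k. poly p x = 0))"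

inductive_set alg_gen :: "'a::field set \<Rightarrow> 'a set \<Rightarrow> 'a set" for k S where
  base_k: "c \<in> k \<Longrightarrow> c \<in> alg_gen k S"
| base_S: "s \<in> S \<Longrightarrow> s \<in> alg_gen k S"
| add: "x \<in> alg_gen k S \<Longrightarrow> y \<in> alg_gen k S \<Longrightarrow> x + y \<in> alg_gen k S"
| mult: "x \<in> alg_gen k S \<Longrightarrow> y \<in> alg_gen k S \<Longrightarrow> x * y \<in> alg_gen k S"

definition frac_field :: "'a::field set \<Rightarrow> 'a set" where
  "frac_field A = {a / b | a b. a \<in> A \<and> b \<in> A \<and> b \<noteq> 0}"

definition integral_over :: "'a::field set \<Rightarrow> 'a \<Rightarrow> bool" where
  "integral_over A x \<longleftrightarrow> (\<exists>p::'a poly. lead_coeff p = 1 \<and> (\<forall>i. coeff p i \<in> A) \<and> poly p x = 0)"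

inductive_set group_gen :: "'m::ab_group_add set \<Rightarrow> 'm set" for S where
  zero: "0 \<in> group_gen S"
| base: "s \<in> S \<Longrightarrow> s \<in> group_gen S"
| add: "x \<in> group_gen S \<Longrightarrow> y \<in> group_gen S \<Longrightarrow> x + y \<in> group_gen S"
| neg: "x \<in> group_gen S \<Longrightarrow> - x \<in> group_gen S"

text \<open>A = k[X] for a normal affine variety X over the algebraically closed field k of
  characteristic zero, with an effective action of the torus with character lattice
  M = int^'n, i.e. an M-grading A = (+)_m G m whose weights generate M.\<close>
definition normal_affine_torus_algebra ::
  "'a::field_char_0 set \<Rightarrow> 'a set \<Rightarrow> (int^'n::finite \<Rightarrow> 'a set) \<Rightarrow> bool" where
  "normal_affine_torus_algebra k A G \<longleftrightarrow>
     subfield k \<and> alg_closed_in k \<and>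
     (\<exists>S. finite S \<and> S \<subseteq> A \<and> A = alg_gen k S) \<and>
     (\<forall>x\<in>frac_field A. integral_over A x \<longrightarrow> x \<in> A) \<and>
     (\<forall>m. G m \<subseteq> A \<and> 0 \<in> G m \<and> (\<forall>x\<in>G m. \<forall>y\<in>G m. x + y \<in> G m)
          \<and> (\<forall>c\<in>k. \<forall>x\<in>G m. c * x \<in> G m)) \<and>
     k \<subseteq> G 0 \<and>
     (\<forall>m m'. \<forall>x\<in>G m. \<forall>y\<in>G m'. x * y \<in> G (m + m')) \<and>
     (\<forall>a\<in>A. \<exists>D f. finite D \<and> (\<forall>m\<in>D. f m \<in> G m) \<and> a = (\<Sum>m\<in>D. f m)) \<and>
     (\<forall>D f. finite D \<and> (\<forall>m\<in>D. f m \<in> G m) \<and> (\<Sum>m\<in>D. f m) = 0 \<longrightarrow> (\<forall>m\<in>D. f m = 0)) \<and>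
     group_gen {m. G m \<noteq> {0}} = UNIV"

definition is_derivation :: "'a::field set \<Rightarrow> 'a set \<Rightarrow> ('a \<Rightarrow> 'a) \<Rightarrow> bool" where
  "is_derivation k A d \<longleftrightarrow>
     (\<forall>a\<in>A. d a \<in> A) \<and>
     (\<forall>a\<in>A. \<forall>b\<in>A. d (a + b) = d a + d b \<and> d (a * b) = a * d b + b * d a) \<and>
     (\<forall>c\<in>k. \<forall>a\<in>A. d (c * a) = c * d a)"

definition homogeneous_of_degree ::
  "(int^'n::finite \<Rightarrow> 'a set) \<Rightarrow> ('a \<Rightarrow> 'a) \<Rightarrow> int^'n \<Rightarrow> bool" where
  "homogeneous_of_degree G d e \<longleftrightarrow> (\<forall>m. \<forall>x\<in>G m. d x \<in> G (m + e))"

definition locally_nilpotent :: "'a::field set \<Rightarrow> ('a \<Rightarrow> 'a) \<Rightarrow> bool" where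
  "locally_nilpotent A d \<longleftrightarrow> (\<forall>a\<in>A. \<exists>n. (d ^^ n) a = 0)"

text \<open>Unique extension of d to Frac A: d(a/b) = (d a * b - a * d b) / b^2.\<close>
definition frac_ext :: "('a::field \<Rightarrow> 'a) \<Rightarrow> 'a \<Rightarrow> 'a \<Rightarrow> 'a" where
  "frac_ext d a b = (d a * b - a * d b) / b ^ 2"

text \<open>Fiber type: the extension of d to K kills k(X)^T, whose elements are the
  quotients a/b of homogeneous elements of the same degree.\<close>
definition fiber_type :: "(int^'n::finite \<Rightarrow> 'a::field set) \<Rightarrow> ('a \<Rightarrow> 'a) \<Rightarrow> bool" where
  "fiber_type G d \<longleftrightarrow> (\<forall>m. \<forall>a\<in>G m. \<forall>b\<in>G m. b \<noteq> 0 \<longrightarrow> frac_ext d a b = 0)"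

definition homogeneous_LND_fiber_type ::
  "'a::field set \<Rightarrow> 'a set \<Rightarrow> (int^'n::finite \<Rightarrow> 'a set) \<Rightarrow> ('a \<Rightarrow> 'a) \<Rightarrow> bool" where
  "homogeneous_LND_fiber_type k A G d \<longleftrightarrow>
     is_derivation k A d \<and> (\<exists>e. homogeneous_of_degree G d e) \<and>
     locally_nilpotent A d \<and> fiber_type G d"

end

theory Submission
  imports Defs
begin


definition Sw :: "(int^'n::finite \<Rightarrow> 'a::zero set) \<Rightarrow> (int^'n) set" where
  "Sw G = {m. G m \<noteq> {0}}"

definition addA :: "'a::field set \<Rightarrow> ('a \<Rightarrow> 'a) \<Rightarrow> bool" where
  "addA A T \<longleftrightarrow> (\<forall>x\<in>A. T x \<in> A) \<and> (\<forall>x\<in>A. \<forall>y\<in>A. T (x + y) = T x + T y)"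

definition itr :: "'b::plus \<Rightarrow> nat \<Rightarrow> 'b \<Rightarrow> 'b" where
  "itr e j m = ((\<lambda>v. v + e) ^^ j) m"

lemma itr_0[simp]: "itr e 0 m = m" by (simp add: itr_def)
lemma itr_Suc[simp]: "itr e (Suc j) m = itr e j m + e" by (simp add: itr_def)
lemma itr_shift: "itr e j (v + w) = itr e j v + (w::'b::ab_semigroup_add)"
  by (induction j) (simp_all add: ac_simps)
lemma additive_itr:
  assumes "\<And>u v. f (u + v) = f u + (f v :: 'c::comm_ring_1)"
  shows "f (itr e j m) = f m + of_nat j * f e"
  by (induction j) (simp_all add: assms algebra_simps)

locale tor =
  fixes k A :: "'a::field_char_0 set" and G :: "int^'n::finite \<Rightarrow> 'a set"
  assumes NA: "normal_affine_torus_algebra k A G"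
begin

abbreviation "S \<equiv> Sw G"

lemma NA_unf: "subfield k \<and> alg_closed_in k \<and>
     (\<exists>S. finite S \<and> S \<subseteq> A \<and> A = alg_gen k S) \<and>
     (\<forall>x\<in>frac_field A. integral_over A x \<longrightarrow> x \<in> A) \<and>
     (\<forall>m. G m \<subseteq> A \<and> 0 \<in> G m \<and> (\<forall>x\<in>G m. \<forall>y\<in>G m. x + y \<in> G m)
          \<and> (\<forall>c\<in>k. \<forall>x\<in>G m. c * x \<in> G m)) \<and>
     k \<subseteq> G 0 \<and>
     (\<forall>m m'. \<forall>x\<in>G m. \<forall>y\<in>G m'. x * y \<in> G (m + m')) \<and>
     (\<forall>a\<in>A. \<exists>D f. finite D \<and> (\<forall>m\<in>D. f m \<in> G m) \<and> a = (\<Sum>m\<in>D. f m)) \<and>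
     (\<forall>D f. finite D \<and> (\<forall>m\<in>D. f m \<in> G m) \<and> (\<Sum>m\<in>D. f m) = 0 \<longrightarrow> (\<forall>m\<in>D. f m = 0)) \<and>
     group_gen {m. G m \<noteq> {0}} = UNIV"
  using NA unfolding normal_affine_torus_algebra_def by blast

lemma sf: "subfield k" using NA_unf by (elim conjE) blast
lemma G_sub: "G m \<subseteq> A" using NA_unf by (elim conjE) blast
lemma G_zero[simp]: "0 \<in> G m" using NA_unf by (elim conjE) blast
lemma G_add: "x \<in> G m \<Longrightarrow> y \<in> G m \<Longrightarrow> x + y \<in> G m" using NA_unf by (elim conjE) blast
lemma G_smult: "c \<in> k \<Longrightarrow> x \<in> G m \<Longrightarrow> c * x \<in> G m" using NA_unf by (elim conjE) blast
lemma k_G0: "k \<subseteq> G 0" using NA_unf by (elim conjE) blast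
lemma G_mult: "x \<in> G m \<Longrightarrow> y \<in> G m' \<Longrightarrow> x * y \<in> G (m + m')" using NA_unf by (elim conjE) blast
lemma decomp: "a \<in> A \<Longrightarrow> \<exists>D f. finite D \<and> (\<forall>m\<in>D. f m \<in> G m) \<and> a = (\<Sum>m\<in>D. f m)"
  using NA_unf by (elim conjE) blast
lemma indep: "finite D \<Longrightarrow> (\<forall>m\<in>D. f m \<in> G m) \<Longrightarrow> (\<Sum>m\<in>D. f m) = 0 \<Longrightarrow> m \<in> D \<Longrightarrow> f m = 0"
  using NA_unf by (elim conjE) blast
lemma gen: "group_gen S = UNIV" using NA_unf unfolding Sw_def by (elim conjE) blast

lemma A_alg: "\<exists>S0. A = alg_gen k S0" using NA_unf by (elim conjE) blast
lemma A_add: "x \<in> A \<Longrightarrow> y \<in> A \<Longrightarrow> x + y \<in> A"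
  using A_alg alg_gen.add by metis
lemma A_mult: "x \<in> A \<Longrightarrow> y \<in> A \<Longrightarrow> x * y \<in> A"
  using A_alg alg_gen.mult by metis
lemma one_k: "1 \<in> k" using sf unfolding subfield_def by blast
lemma mone_k: "-1 \<in> k" using sf unfolding subfield_def by blast
lemma one_G0: "1 \<in> G 0" using one_k k_G0 by blast
lemma zero_A[simp]: "0 \<in> A" using G_sub G_zero by blast
lemma G_A: "x \<in> G m \<Longrightarrow> x \<in> A" using G_sub by blast
lemma G_neg: "x \<in> G m \<Longrightarrow> - x \<in> G m"
  using G_smult[OF mone_k] by fastforce
lemma G_diff: "x \<in> G m \<Longrightarrow> y \<in> G m \<Longrightarrow> x - y \<in> G m"
  using G_add G_neg by (metis diff_conv_add_uminus)
lemma A_neg: "x \<in> A \<Longrightarrow> - x \<in> A"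
proof -
  assume "x \<in> A"
  moreover have "-1 \<in> A" using mone_k k_G0 G_sub by blast
  ultimately show ?thesis using A_mult[of "-1" x] by simp
qed
lemma A_diff: "x \<in> A \<Longrightarrow> y \<in> A \<Longrightarrow> x - y \<in> A"
  using A_add A_neg by (metis diff_conv_add_uminus)

lemma inS: "x \<in> G m \<Longrightarrow> x \<noteq> 0 \<Longrightarrow> m \<in> S"
  unfolding Sw_def by auto
lemma S_ex: "m \<in> S \<Longrightarrow> \<exists>x\<in>G m. x \<noteq> 0"
  unfolding Sw_def using G_zero by blast
lemma notS: "m \<notin> S \<Longrightarrow> x \<in> G m \<Longrightarrow> x = 0"
  using inS by blast
lemma S_zero: "0 \<in> S" using one_G0 inS by fastforce
lemma S_add: "m \<in> S \<Longrightarrow> m' \<in> S \<Longrightarrow> m + m' \<in> S"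
  by (meson G_mult S_ex inS mult_eq_0_iff)

lemma S_diff: "\<exists>p q. p \<in> S \<and> q \<in> S \<and> v = p - q"
proof -
  have "w \<in> group_gen S \<Longrightarrow> \<exists>p q. p \<in> S \<and> q \<in> S \<and> w = p - q" for w
  proof (induction rule: group_gen.induct)
    case zero then show ?case using S_zero by force
  next
    case (base s) then show ?case using S_zero by force
  next
    case (add x y)
    then obtain p q p' q' where "p \<in> S" "q \<in> S" "x = p - q" "p' \<in> S" "q' \<in> S" "y = p' - q'" by blast
    then show ?case by (intro exI[of _ "p + p'"] exI[of _ "q + q'"]) (auto simp: S_add algebra_simps)
  next
    case (neg x)
    then show ?case by force
  qed
  then show ?thesis using gen by blast
qed

lemma sum_in_A: "finite D \<Longrightarrow> (\<forall>m\<in>D. f m \<in> A) \<Longrightarrow> (\<Sum>m\<in>D. f m) \<in> A"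
  by (induction D rule: finite_induct) (auto simp: A_add)

lemma addA_zero: "addA A T \<Longrightarrow> T 0 = 0"
  unfolding addA_def using zero_A by (metis add.right_neutral add_left_imp_eq)

lemma addA_sum: assumes T: "addA A T" shows "finite D \<Longrightarrow> (\<forall>m\<in>D. f m \<in> A) \<Longrightarrow> T (\<Sum>m\<in>D. f m) = (\<Sum>m\<in>D. T (f m))"
proof (induction D rule: finite_induct)
  case empty then show ?case using addA_zero T by simp
next
  case (insert x F)
  then have "(\<Sum>m\<in>F. f m) \<in> A" using sum_in_A by blast
  then show ?case using insert T unfolding addA_def by simp
qed

lemma addA_funpow: "addA A T \<Longrightarrow> addA A (T ^^ n)"
  by (induction n) (auto simp: addA_def)

lemma addA_der: "is_derivation k A d \<Longrightarrow> addA A d"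
  unfolding is_derivation_def addA_def by blast

lemma addA_plus: "addA A d1 \<Longrightarrow> addA A d2 \<Longrightarrow> addA A (\<lambda>x. d1 x + d2 x)"
  unfolding addA_def by (auto simp: A_add)

lemma addA_comm: "addA A d1 \<Longrightarrow> addA A d2 \<Longrightarrow> addA A (\<lambda>x. d1 (d2 x) - d2 (d1 x))"
  unfolding addA_def by (auto simp: A_diff)

lemma lnd_from_bound:
  assumes T: "addA A T" and b: "\<And>m x. x \<in> G m \<Longrightarrow> \<exists>N. \<forall>n\<ge>N. (T ^^ n) x = 0"
  shows "locally_nilpotent A T"
  unfolding locally_nilpotent_def
proof
  fix a assume "a \<in> A"
  then obtain D f where D: "finite D" "\<forall>m\<in>D. f m \<in> G m" "a = (\<Sum>m\<in>D. f m)"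
    using decomp by blast
  have "\<forall>m\<in>D. \<exists>N. \<forall>n\<ge>N. (T ^^ n) (f m) = 0" using b D(2) by blast
  then obtain Nf where Nf: "\<forall>m\<in>D. \<forall>n\<ge>Nf m. (T ^^ n) (f m) = 0" by metis
  define n where "n = (\<Sum>m\<in>D. Nf m)"
  have "\<forall>m\<in>D. Nf m \<le> n" unfolding n_def using D(1) by (simp add: member_le_sum)
  then have "\<forall>m\<in>D. (T ^^ n) (f m) = 0" using Nf by blast
  moreover have "(T ^^ n) a = (\<Sum>m\<in>D. (T ^^ n) (f m))"
    using addA_sum[OF addA_funpow[OF T] D(1)] D(2,3) G_A by blast
  ultimately show "\<exists>n. (T ^^ n) a = 0" by auto
qed

lemma indep_inj:
  assumes "finite I" "inj_on g I" "\<forall>i\<in>I. z i \<in> G (g i)" "(\<Sum>i\<in>I. z i) = 0" "i \<in> I"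
  shows "z i = 0"
proof -
  define f where "f \<mu> = z (the_inv_into I g \<mu>)" for \<mu>
  have fg: "f (g j) = z j" if "j \<in> I" for j
    unfolding f_def using the_inv_into_f_f[OF assms(2) that] by simp
  have "(\<Sum>\<mu>\<in>g ` I. f \<mu>) = (\<Sum>j\<in>I. f (g j))" using sum.reindex[OF assms(2)] by simp
  also have "\<dots> = 0" using assms(4) fg by simp
  finally have s: "(\<Sum>\<mu>\<in>g ` I. f \<mu>) = 0" .
  have "\<forall>\<mu>\<in>g ` I. f \<mu> \<in> G \<mu>" using fg assms(3) by auto
  then have "f (g i) = 0" using indep[OF finite_imageI[OF assms(1)] _ s] assms(5) by blast
  then show ?thesis using fg assms(5) by simp
qed

end


context tor
begin

lemma der_zero: "is_derivation k A d \<Longrightarrow> d 0 = 0"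
  using addA_zero addA_der by blast

lemma homog_funpow:
  assumes "\<And>m x. x \<in> G m \<Longrightarrow> d x \<in> G (m + e)"
  shows "x \<in> G m \<Longrightarrow> (d ^^ n) x \<in> G (itr e n m)"
  by (induction n) (auto simp: assms)

lemma struct_lemma:
  assumes hd: "homogeneous_LND_fiber_type k A G d" and nz: "\<exists>a\<in>A. d a \<noteq> 0"
  shows "\<exists>\<psi> c e. c \<noteq> 0 \<and> (\<forall>u v. \<psi> (u + v) = \<psi> u + \<psi> v) \<and> \<psi> e = -1 \<and>
     (\<forall>m\<in>S. \<psi> m \<ge> 0) \<and> (\<exists>m\<in>S. \<psi> m > 0) \<and>
     (\<forall>m. \<forall>x\<in>G m. d x = of_int (\<psi> m) * c * x) \<and> (\<forall>m. \<forall>x\<in>G m. d x \<in> G (m + e))"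
proof -
  have der: "is_derivation k A d" and lnd: "locally_nilpotent A d" and ft: "fiber_type G d"
    using hd unfolding homogeneous_LND_fiber_type_def by blast+
  obtain e where he: "\<And>m x. x \<in> G m \<Longrightarrow> d x \<in> G (m + e)"
    using hd unfolding homogeneous_LND_fiber_type_def homogeneous_of_degree_def by blast
  have d0: "d 0 = 0" using der_zero der by blast
  have leib: "d (x * y) = x * d y + y * d x" if "x \<in> A" "y \<in> A" for x y
    using der that unfolding is_derivation_def by blast
  define sel where "sel m = (SOME x. x \<in> G m \<and> x \<noteq> 0)" for m
  have sel: "sel m \<in> G m" "sel m \<noteq> 0" if "m \<in> S" for m
    using someI_ex[OF S_ex[OF that, unfolded Bex_def]] unfolding sel_def by blast+
  define \<phi> where "\<phi> m = d (sel m) / sel m" for m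
  have F1: "d x = \<phi> m * x" if "x \<in> G m" "m \<in> S" for x m
  proof -
    have "frac_ext d x (sel m) = 0" using ft that sel unfolding fiber_type_def by blast
    then have "d x * sel m = x * d (sel m)" using sel[OF that(2)] unfolding frac_ext_def by simp
    then show ?thesis unfolding \<phi>_def using sel[OF that(2)] by (simp add: field_simps)
  qed
  have \<phi>add: "\<phi> (m + m') = \<phi> m + \<phi> m'" if hm: "m \<in> S" and hm': "m' \<in> S" for m m'
  proof -
    obtain x y where xy: "x \<in> G m" "x \<noteq> 0" "y \<in> G m'" "y \<noteq> 0" using S_ex[OF hm] S_ex[OF hm'] by blast
    have xyG: "x * y \<in> G (m + m')" using G_mult xy by blast
    have "\<phi> (m + m') * (x * y) = d (x * y)" using F1[OF xyG] S_add[OF hm hm'] by simp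
    also have "\<dots> = x * d y + y * d x" using leib G_A xy by blast
    also have "\<dots> = (\<phi> m + \<phi> m') * (x * y)" using F1 xy hm hm' by (simp add: algebra_simps)
    finally show ?thesis using xy by simp
  qed
  have \<phi>0: "\<phi> 0 = 0" using \<phi>add[OF S_zero S_zero] by simp
  define \<Phi> where "\<Phi> v = (let pq = (SOME pq. fst pq \<in> S \<and> snd pq \<in> S \<and> v = fst pq - snd pq)
     in \<phi> (fst pq) - \<phi> (snd pq))" for v
  have \<Phi>wd: "\<Phi> v = \<phi> p - \<phi> q" if hp: "p \<in> S" and hq: "q \<in> S" and hv: "v = p - q" for v p q
  proof -
    define pq0 where "pq0 = (SOME pq. fst pq \<in> S \<and> snd pq \<in> S \<and> v = fst pq - snd pq)"
    have "\<exists>pq. fst pq \<in> S \<and> snd pq \<in> S \<and> v = fst pq - snd pq"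
      by (rule exI[of _ "(p, q)"]) (simp add: hp hq hv)
    from someI_ex[OF this] have h: "fst pq0 \<in> S" "snd pq0 \<in> S" "v = fst pq0 - snd pq0"
      unfolding pq0_def by blast+
    have "p + snd pq0 = fst pq0 + q" using h hv by (simp add: algebra_simps)
    then have "\<phi> (p + snd pq0) = \<phi> (fst pq0 + q)" by simp
    then have "\<phi> p + \<phi> (snd pq0) = \<phi> (fst pq0) + \<phi> q" using \<phi>add hp hq h by simp
    then show ?thesis unfolding \<Phi>_def pq0_def[symmetric] Let_def by (simp add: algebra_simps)
  qed
  have \<Phi>S: "\<Phi> m = \<phi> m" if "m \<in> S" for m using \<Phi>wd[OF that S_zero] \<phi>0 by simp
  have \<Phi>add: "\<Phi> (u + v) = \<Phi> u + \<Phi> v" for u v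
  proof -
    obtain p q p' q' where h: "p \<in> S" "q \<in> S" "u = p - q" "p' \<in> S" "q' \<in> S" "v = p' - q'"
      using S_diff by meson
    have "u + v = (p + p') - (q + q')" by (simp only: h(3,6) add_diff_add)
    then have e1: "\<Phi> (u + v) = \<phi> (p + p') - \<phi> (q + q')" using \<Phi>wd S_add h by blast
    have e2: "\<Phi> u = \<phi> p - \<phi> q" "\<Phi> v = \<phi> p' - \<phi> q'" using \<Phi>wd h by blast+
    have e3: "\<phi> (p + p') = \<phi> p + \<phi> p'" "\<phi> (q + q') = \<phi> q + \<phi> q'" using \<phi>add h by blast+
    show ?thesis unfolding e1 e2 e3 by (simp add: algebra_simps)
  qed
  have F2: "d x = \<Phi> m * x" if "x \<in> G m" for x m
  proof (cases "x = 0")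
    case True then show ?thesis using d0 by simp
  next
    case False then show ?thesis using F1 \<Phi>S inS that by simp
  qed
  have pw: "(d ^^ n) x = (\<Prod>j<n. \<Phi> (itr e j m)) * x" if "x \<in> G m" for x m n
  proof (induction n)
    case 0 then show ?case by simp
  next
    case (Suc n)
    have "(d ^^ Suc n) x = d ((d ^^ n) x)" by simp
    also have "\<dots> = \<Phi> (itr e n m) * (d ^^ n) x" using F2 homog_funpow[of d e, OF he that] by blast
    finally show ?case using Suc by (simp add: algebra_simps)
  qed
  have \<Phi>itr: "\<Phi> (itr e j m) = \<Phi> m + of_nat j * \<Phi> e" for j m
    using additive_itr[of \<Phi>] \<Phi>add by blast
  define c where "c = - \<Phi> e"
  have integ: "\<exists>j::nat. \<Phi> m = of_nat j * c" if hm: "m \<in> S" for m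
  proof -
    obtain x where x: "x \<in> G m" "x \<noteq> 0" using S_ex[OF hm] by blast
    then obtain n where "(d ^^ n) x = 0" using lnd G_A unfolding locally_nilpotent_def by blast
    then have "(\<Prod>j<n. \<Phi> (itr e j m)) = 0" using pw[OF x(1)] x(2) by simp
    then obtain j where "\<Phi> (itr e j m) = 0" by auto
    then have h: "\<Phi> m + of_nat j * \<Phi> e = 0" using \<Phi>itr by simp
    have "\<Phi> m = \<Phi> m + of_nat j * \<Phi> e - of_nat j * \<Phi> e" by simp
    also have "\<dots> = of_nat j * c" using h by (simp add: c_def)
    finally show ?thesis by blast
  qed
  have nz2: False if "\<forall>m\<in>S. \<Phi> m = 0"
  proof -
    have z: "d x = 0" if "x \<in> G m" for x m
      using F2[OF that] that \<open>\<forall>m\<in>S. \<Phi> m = 0\<close> inS by (cases "x = 0") auto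
    obtain a where a: "a \<in> A" "d a \<noteq> 0" using nz by blast
    then obtain D f where D: "finite D" "\<forall>m\<in>D. f m \<in> G m" "a = (\<Sum>m\<in>D. f m)"
      using decomp by blast
    have "d a = (\<Sum>m\<in>D. d (f m))" using addA_sum[OF addA_der[OF der] D(1)] D(2,3) G_A by blast
    also have "\<dots> = 0" using z D(2) by (intro sum.neutral) blast
    finally show False using a by simp
  qed
  have c0: "c \<noteq> 0"
  proof
    assume "c = 0"
    then have "\<forall>m\<in>S. \<Phi> m = 0" using integ by force
    then show False using nz2 by blast
  qed
  have \<Phi>int: "\<exists>z::int. \<Phi> v = of_int z * c" for v
  proof -
    obtain p q where pq: "p \<in> S" "q \<in> S" "v = p - q" using S_diff by blast
    obtain jp jq where "\<Phi> p = of_nat jp * c" "\<Phi> q = of_nat jq * c" using integ pq by meson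
    moreover have "\<Phi> v = \<Phi> p - \<Phi> q" using \<Phi>wd[OF pq] \<Phi>S pq by simp
    ultimately have "\<Phi> v = of_int (int jp - int jq) * c" by (simp add: algebra_simps)
    then show ?thesis by blast
  qed
  define \<psi> where "\<psi> v = (SOME z::int. \<Phi> v = of_int z * c)" for v
  have h\<psi>: "\<Phi> v = of_int (\<psi> v) * c" for v
    unfolding \<psi>_def using someI_ex[OF \<Phi>int] by blast
  have uniq: "z = z'" if "of_int z * c = of_int z' * c" for z z' :: int
    using that c0 by simp
  have \<psi>add: "\<psi> (u + v) = \<psi> u + \<psi> v" for u v
    using uniq[of "\<psi> (u + v)" "\<psi> u + \<psi> v"] h\<psi> \<Phi>add by (simp add: algebra_simps)
  have \<psi>e: "\<psi> e = -1"
    using uniq[of "\<psi> e" "-1"] h\<psi>[of e] unfolding c_def by simp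
  have \<psi>pos: "\<psi> m \<ge> 0" if hm: "m \<in> S" for m
  proof -
    obtain j where "\<Phi> m = of_nat j * c" using integ[OF hm] by blast
    then have "\<psi> m = int j" using uniq[of "\<psi> m" "int j"] h\<psi>[of m] by simp
    then show ?thesis by simp
  qed
  have \<psi>ex: "\<exists>m\<in>S. \<psi> m > 0"
  proof (rule ccontr)
    assume "\<not> ?thesis"
    then have "\<forall>m\<in>S. \<psi> m = 0" using \<psi>pos by force
    then have "\<forall>m\<in>S. \<Phi> m = 0" using h\<psi> by simp
    then show False using nz2 by blast
  qed
  have act: "d x = of_int (\<psi> m) * c * x" if "x \<in> G m" for m x
    using F2[OF that] h\<psi> by simp
  show ?thesis
    apply (intro exI[of _ \<psi>] exI[of _ c] exI[of _ e] conjI allI ballI)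
    apply (rule c0) apply (rule \<psi>add) apply (rule \<psi>e) apply (erule \<psi>pos) apply (rule \<psi>ex)
    apply (erule act) apply (erule he) done
qed

end


fun Nf :: "(nat \<Rightarrow> nat \<Rightarrow> int) \<Rightarrow> (nat \<Rightarrow> nat \<Rightarrow> int) \<Rightarrow> nat \<Rightarrow> nat \<Rightarrow> int" where
  "Nf p q 0 i = (if i = 0 then 1 else 0)"
| "Nf p q (Suc n) i = (if i = 0 then 0 else Nf p q n (i - 1) * p n (i - 1)) + Nf p q n i * q n i"

lemma Nf_big: "n < i \<Longrightarrow> Nf p q n i = 0"
  by (induction n arbitrary: i) auto

lemma additive_diff:
  fixes f :: "'b::ab_group_add \<Rightarrow> int"
  assumes "\<And>u v. f (u + v) = f u + f v"
  shows "f (p - q) = f p - f q"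
proof -
  have "f (p - q + q) = f (p - q) + f q" by (rule assms)
  then show ?thesis by simp
qed

locale two = tor k A G for k A :: "'a::field_char_0 set" and G :: "int^'n::finite \<Rightarrow> 'a set" +
  fixes d1 d2 :: "'a \<Rightarrow> 'a" and \<psi>1 \<psi>2 :: "int^'n \<Rightarrow> int" and c1 c2 :: 'a and e1 e2 :: "int^'n"
  assumes c1nz: "c1 \<noteq> 0" and c2nz: "c2 \<noteq> 0"
    and add1: "\<And>u v. \<psi>1 (u + v) = \<psi>1 u + \<psi>1 v" and add2: "\<And>u v. \<psi>2 (u + v) = \<psi>2 u + \<psi>2 v"
    and e11: "\<psi>1 e1 = -1" and e22: "\<psi>2 e2 = -1"
    and pos1: "\<And>m. m \<in> Sw G \<Longrightarrow> \<psi>1 m \<ge> 0" and pos2: "\<And>m. m \<in> Sw G \<Longrightarrow> \<psi>2 m \<ge> 0"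
    and ex1: "\<exists>m\<in>Sw G. \<psi>1 m > 0" and ex2: "\<exists>m\<in>Sw G. \<psi>2 m > 0"
    and act1: "\<And>m x. x \<in> G m \<Longrightarrow> d1 x = of_int (\<psi>1 m) * c1 * x"
    and act2: "\<And>m x. x \<in> G m \<Longrightarrow> d2 x = of_int (\<psi>2 m) * c2 * x"
    and hom1: "\<And>m x. x \<in> G m \<Longrightarrow> d1 x \<in> G (m + e1)"
    and hom2: "\<And>m x. x \<in> G m \<Longrightarrow> d2 x \<in> G (m + e2)"
    and der1: "addA A d1" and der2: "addA A d2"
begin

lemma swap: "two k A G d2 d1 \<psi>2 \<psi>1 c2 c1 e2 e1"
  by (rule two.intro[OF tor_axioms two_axioms.intro[OF c2nz c1nz add2 add1 e22 e11 pos2 pos1 ex2 ex1 act2 act1 hom2 hom1 der2 der1]])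

lemma psi1_itr: "\<psi>1 (itr e j m) = \<psi>1 m + int j * \<psi>1 e"
  using additive_itr[of \<psi>1] add1 by simp
lemma psi2_itr: "\<psi>2 (itr e j m) = \<psi>2 m + int j * \<psi>2 e"
  using additive_itr[of \<psi>2] add2 by simp

lemma iter1: "m \<in> S \<Longrightarrow> int j \<le> \<psi>1 m \<Longrightarrow> itr e1 j m \<in> S"
proof (induction j)
  case 0 then show ?case by simp
next
  case (Suc j)
  then have s: "itr e1 j m \<in> S" by simp
  have "\<psi>1 (itr e1 j m) \<ge> 1" using Suc.prems psi1_itr[of e1 j m] e11 by simp
  moreover obtain x where x: "x \<in> G (itr e1 j m)" "x \<noteq> 0" using S_ex[OF s] by blast
  ultimately have "d1 x \<noteq> 0" using act1[OF x(1)] c1nz by simp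
  then show ?case using hom1[OF x(1)] inS by simp
qed

lemma iter2: "m \<in> S \<Longrightarrow> int j \<le> \<psi>2 m \<Longrightarrow> itr e2 j m \<in> S"
proof (induction j)
  case 0 then show ?case by simp
next
  case (Suc j)
  then have s: "itr e2 j m \<in> S" by simp
  have "\<psi>2 (itr e2 j m) \<ge> 1" using Suc.prems psi2_itr[of e2 j m] e22 by simp
  moreover obtain x where x: "x \<in> G (itr e2 j m)" "x \<noteq> 0" using S_ex[OF s] by blast
  ultimately have "d2 x \<noteq> 0" using act2[OF x(1)] c2nz by simp
  then show ?case using hom2[OF x(1)] inS by simp
qed

lemma caseNeg:
  assumes b: "\<psi>2 e1 < 0"
  shows "\<psi>1 v = \<psi>2 v"
proof -
  have key: "\<psi>1 m + \<psi>1 e2 * \<psi>2 m = 0" if hm: "m \<in> S" for m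
  proof -
    define m' where "m' = itr e2 (nat (\<psi>2 m)) m"
    have m'S: "m' \<in> S" unfolding m'_def using iter2[OF hm] pos2[OF hm] by simp
    have p2: "\<psi>2 m' = 0" "\<psi>1 m' = \<psi>1 m + \<psi>1 e2 * \<psi>2 m"
      unfolding m'_def using psi2_itr psi1_itr e22 pos2[OF hm] by (simp_all add: algebra_simps)
    define m'' where "m'' = itr e1 (nat (\<psi>1 m')) m'"
    have "m'' \<in> S" unfolding m''_def using iter1[OF m'S] pos1[OF m'S] by simp
    then have "\<psi>2 m'' \<ge> 0" by (rule pos2)
    moreover have "\<psi>2 m'' = nat (\<psi>1 m') * \<psi>2 e1" unfolding m''_def using psi2_itr p2 by simp
    ultimately have h: "int (nat (\<psi>1 m')) * \<psi>2 e1 \<ge> 0" by simp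
    have "\<not> int (nat (\<psi>1 m')) > 0" using mult_pos_neg[of "int (nat (\<psi>1 m'))" "\<psi>2 e1"] b h by linarith
    then have "nat (\<psi>1 m') = 0" by (simp split: if_splits)
    then show ?thesis using pos1[OF m'S] p2 by simp
  qed
  obtain m0 where m0: "m0 \<in> S" "\<psi>1 m0 > 0" using ex1 by blast
  have "\<psi>1 e2 * \<psi>2 m0 < 0" using key[OF m0(1)] m0(2) by simp
  then have a: "\<psi>1 e2 < 0" using pos2[OF m0(1)] mult_nonneg_nonneg[of "\<psi>1 e2" "\<psi>2 m0"] by linarith
  have lin: "\<psi>1 w = - \<psi>1 e2 * \<psi>2 w" for w
  proof -
    obtain p q where pq: "p \<in> S" "q \<in> S" "w = p - q" using S_diff by blast
    have w1: "\<psi>1 w = \<psi>1 p - \<psi>1 q" unfolding pq(3) by (rule additive_diff, rule add1)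
    have w2: "\<psi>2 w = \<psi>2 p - \<psi>2 q" unfolding pq(3) by (rule additive_diff, rule add2)
    have k1: "\<psi>1 p = - \<psi>1 e2 * \<psi>2 p" "\<psi>1 q = - \<psi>1 e2 * \<psi>2 q" using key[OF pq(1)] key[OF pq(2)] by simp_all
    show ?thesis unfolding w1 w2 k1 by (simp add: algebra_simps)
  qed
  have "\<psi>1 e2 * \<psi>2 e1 = 1" using lin[of e1] e11 by simp
  then have "\<psi>1 e2 = -1" using a b
    unfolding zmult_eq_1_iff by linarith
  then show ?thesis using lin[of v] by simp
qed

abbreviation "Dop \<equiv> (\<lambda>x. d1 x + d2 x)"
abbreviation "Cop \<equiv> (\<lambda>x. d1 (d2 x) - d2 (d1 x))"

lemma addD: "addA A Dop" using addA_plus der1 der2 by blast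
lemma addC: "addA A Cop" using addA_comm der1 der2 by blast

lemma Chom: "x \<in> G m \<Longrightarrow> Cop x \<in> G (m + (e1 + e2))"
proof -
  assume x: "x \<in> G m"
  have "d1 (d2 x) \<in> G (m + (e1 + e2))" using hom1[OF hom2[OF x]] by (simp add: ac_simps)
  moreover have "d2 (d1 x) \<in> G (m + (e1 + e2))" using hom2[OF hom1[OF x]] by (simp add: ac_simps)
  ultimately show ?thesis using G_diff by blast
qed

lemma Cact: "x \<in> G m \<Longrightarrow> Cop x = of_int (\<psi>1 e2 * \<psi>2 m - \<psi>2 e1 * \<psi>1 m) * (c1 * c2) * x"
proof -
  assume x: "x \<in> G m"
  have "d1 (d2 x) = of_int (\<psi>1 (m + e2)) * c1 * (of_int (\<psi>2 m) * c2 * x)"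
    using act1[OF hom2[OF x]] act2[OF x] by simp
  moreover have "d2 (d1 x) = of_int (\<psi>2 (m + e1)) * c2 * (of_int (\<psi>1 m) * c1 * x)"
    using act2[OF hom1[OF x]] act1[OF x] by simp
  ultimately show ?thesis by (simp add: add1 add2 algebra_simps)
qed

lemma bothLND:
  assumes Padd: "\<And>u v. P (u + v) = P u + (P v :: int)" and P1: "P e1 = -1" and P2: "P e2 = -1"
    and Ppos: "\<And>m. m \<in> S \<Longrightarrow> P m \<ge> 0"
  shows "locally_nilpotent A Dop \<and> locally_nilpotent A Cop"
proof
  have bD: "(Dop ^^ n) x = 0" if "x \<in> G m" "P m < int n" for n m x
    using that
  proof (induction n arbitrary: m x)
    case 0
    then have "m \<notin> S" using Ppos by force
    then show ?case using notS 0 by simp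
  next
    case (Suc n)
    have "(Dop ^^ Suc n) x = (Dop ^^ n) (d1 x + d2 x)" by (simp add: funpow_Suc_right del: funpow.simps)
    also have "\<dots> = (Dop ^^ n) (d1 x) + (Dop ^^ n) (d2 x)"
      using addA_funpow[OF addD, of n] hom1[OF Suc.prems(1)] hom2[OF Suc.prems(1)] G_A
      unfolding addA_def by blast
    also have "\<dots> = 0"
      using Suc.IH[OF hom1[OF Suc.prems(1)]] Suc.IH[OF hom2[OF Suc.prems(1)]] Suc.prems(2) Padd P1 P2
      by simp
    finally show ?case .
  qed
  show "locally_nilpotent A Dop"
  proof (rule lnd_from_bound[OF addD])
    fix m x assume "x \<in> G m"
    then show "\<exists>N. \<forall>n\<ge>N. (Dop ^^ n) x = 0"
      by (intro exI[of _ "nat (P m + 1)"]) (auto intro!: bD)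
  qed
  have bC: "(Cop ^^ n) x = 0" if "x \<in> G m" "P m < int n" for n m x
    using that
  proof (induction n arbitrary: m x)
    case 0
    then have "m \<notin> S" using Ppos by force
    then show ?case using notS 0 by simp
  next
    case (Suc n)
    have "(Cop ^^ Suc n) x = (Cop ^^ n) (Cop x)" by (simp add: funpow_Suc_right del: funpow.simps)
    also have "\<dots> = 0"
      using Suc.IH[OF Chom[OF Suc.prems(1)]] Suc.prems(2) Padd P1 P2 by simp
    finally show ?case .
  qed
  show "locally_nilpotent A Cop"
  proof (rule lnd_from_bound[OF addC])
    fix m x assume "x \<in> G m"
    then show "\<exists>N. \<forall>n\<ge>N. (Cop ^^ n) x = 0"
      by (intro exI[of _ "nat (P m + 1)"]) (auto intro!: bC)
  qed
qed

end


context two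
begin

lemma CnotLND:
  assumes a: "\<psi>1 e2 \<ge> 1" and b: "\<psi>2 e1 \<ge> 1"
  shows "\<not> locally_nilpotent A Cop"
proof -
  define E where "E = e1 + e2"
  define \<alpha> where "\<alpha> v = \<psi>1 e2 * \<psi>2 v - \<psi>2 e1 * \<psi>1 v" for v
  have \<alpha>itr: "\<alpha> (itr E j m) = \<alpha> m + int j * (\<psi>2 e1 - \<psi>1 e2)" for j m
  proof -
    have h1: "\<psi>1 (itr E j m) = \<psi>1 m + int j * (\<psi>1 e2 - 1)" using psi1_itr add1 e11 unfolding E_def by (simp add: algebra_simps)
    have h2: "\<psi>2 (itr E j m) = \<psi>2 m + int j * (\<psi>2 e1 - 1)" using psi2_itr add2 e22 unfolding E_def by (simp add: algebra_simps)
    show ?thesis unfolding \<alpha>_def h1 h2 by (simp add: algebra_simps)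
  qed
  have pw: "(Cop ^^ n) x = (\<Prod>j<n. of_int (\<alpha> (itr E j m)) * (c1 * c2)) * x" if x: "x \<in> G m" for x m n
  proof (induction n)
    case 0 then show ?case by simp
  next
    case (Suc n)
    have "(Cop ^^ n) x \<in> G (itr E n m)"
      using homog_funpow[of Cop E, OF Chom[unfolded E_def[symmetric]] x] by blast
    then have "(Cop ^^ Suc n) x = of_int (\<alpha> (itr E n m)) * (c1 * c2) * (Cop ^^ n) x"
      using Cact unfolding \<alpha>_def by simp
    then show ?case using Suc by (simp add: algebra_simps)
  qed
  have ge1: "(x::int) \<ge> 1 \<Longrightarrow> y \<ge> 1 \<Longrightarrow> x * y \<ge> 1" for x y
    using mult_mono[of 1 x 1 y] by simp
  have "\<exists>m0\<in>S. \<forall>j. \<alpha> (itr E j m0) \<noteq> 0"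
  proof (cases "\<psi>2 e1 \<ge> \<psi>1 e2")
    case True
    obtain m1 where m1: "m1 \<in> S" "\<psi>1 m1 > 0" using ex1 by blast
    define m0 where "m0 = itr e1 (nat (\<psi>1 m1)) m1"
    have S0: "m0 \<in> S" unfolding m0_def using iter1[OF m1(1)] m1(2) by simp
    have p1: "\<psi>1 m0 = 0" "\<psi>2 m0 = \<psi>2 m1 + int (nat (\<psi>1 m1)) * \<psi>2 e1"
      unfolding m0_def using psi1_itr psi2_itr e11 m1(2) by simp_all
    have "int (nat (\<psi>1 m1)) * \<psi>2 e1 \<ge> 1" using ge1 m1(2) b by simp
    then have "\<psi>2 m0 \<ge> 1" using p1 pos2[OF m1(1)] by simp
    then have "\<alpha> m0 \<ge> 1" unfolding \<alpha>_def using p1(1) ge1 a by simp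
    moreover have "int j * (\<psi>2 e1 - \<psi>1 e2) \<ge> 0" for j using True by simp
    ultimately show ?thesis using S0 \<alpha>itr by (metis add_increasing2 not_one_le_zero)
  next
    case False
    obtain m1 where m1: "m1 \<in> S" "\<psi>2 m1 > 0" using ex2 by blast
    define m0 where "m0 = itr e2 (nat (\<psi>2 m1)) m1"
    have S0: "m0 \<in> S" unfolding m0_def using iter2[OF m1(1)] m1(2) by simp
    have p1: "\<psi>2 m0 = 0" "\<psi>1 m0 = \<psi>1 m1 + int (nat (\<psi>2 m1)) * \<psi>1 e2"
      unfolding m0_def using psi1_itr psi2_itr e22 m1(2) by simp_all
    have "int (nat (\<psi>2 m1)) * \<psi>1 e2 \<ge> 1" using ge1 m1(2) a by simp
    then have "\<psi>1 m0 \<ge> 1" using p1 pos1[OF m1(1)] by simp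
    then have "\<psi>2 e1 * \<psi>1 m0 \<ge> 1" using ge1 b by simp
    then have "\<alpha> m0 \<le> -1" unfolding \<alpha>_def using p1(1) by simp
    moreover have "int j * (\<psi>2 e1 - \<psi>1 e2) \<le> 0" for j using False by (simp add: mult_nonneg_nonpos)
    ultimately have "\<alpha> m0 + int j * (\<psi>2 e1 - \<psi>1 e2) \<noteq> 0" for j
      by (smt (verit))
    then show ?thesis using S0 \<alpha>itr by metis
  qed
  then obtain m0 where m0: "m0 \<in> S" "\<forall>j. \<alpha> (itr E j m0) \<noteq> 0" by blast
  obtain x0 where x0: "x0 \<in> G m0" "x0 \<noteq> 0" using S_ex[OF m0(1)] by blast
  have "(Cop ^^ n) x0 \<noteq> 0" for n
    using pw[OF x0(1), of n] x0(2) m0(2) c1nz c2nz by simp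
  then show ?thesis using x0(1) G_A unfolding locally_nilpotent_def by blast
qed

end


context two
begin

lemma d2_zero: "d2 0 = 0" using act2[OF G_zero[of 0]] by simp
lemma d1_zero: "d1 0 = 0" using act1[OF G_zero[of 0]] by simp

lemma DnotLND:
  assumes a: "\<psi>1 e2 \<ge> 1" and b: "\<psi>2 e1 \<ge> 1"
  shows "\<not> locally_nilpotent A Dop"
proof
  assume lnd: "locally_nilpotent A Dop"
  obtain m0 where m0: "m0 \<in> S" "\<psi>1 m0 > 0" using ex1 by blast
  obtain x0 where x0: "x0 \<in> G m0" "x0 \<noteq> 0" using S_ex[OF m0(1)] by blast
  define deg where "deg n i = itr e1 i (itr e2 (n - i) m0)" for n i
  define p where "p n i = \<psi>1 (deg n i)" for n i
  define q where "q n i = \<psi>2 (deg n i)" for n i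
  define N where "N = Nf p q"
  define t where "t n i = c1 ^ i * c2 ^ (n - i) * of_int (N n i) * x0" for n i
  have degS1: "deg (Suc n) (Suc i) = deg n i + e1" for n i unfolding deg_def by simp
  have degS2: "deg (Suc n) i = deg n i + e2" if "i \<le> n" for n i
  proof -
    have "Suc n - i = Suc (n - i)" using that by simp
    then show ?thesis unfolding deg_def by (simp add: itr_shift)
  qed
  have p_deg: "p n i = \<psi>1 m0 + int (n - i) * \<psi>1 e2 - int i" for n i
    unfolding p_def deg_def using psi1_itr e11 by simp
  have NS0: "N (Suc n) 0 = N n 0 * q n 0" for n unfolding N_def by simp
  have NS: "N (Suc n) (Suc i) = N n i * p n i + N n (Suc i) * q n (Suc i)" for n i
    unfolding N_def by simp
  have Nbig: "n < i \<Longrightarrow> N n i = 0" for n i unfolding N_def by (rule Nf_big)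
  have tbig: "n < i \<Longrightarrow> t n i = 0" for n i unfolding t_def using Nbig by simp
  have rep: "(Dop ^^ n) x0 = (\<Sum>i\<le>n. t n i) \<and> (\<forall>i. t n i \<in> G (deg n i))" for n
  proof (induction n)
    case 0
    have "t 0 i \<in> G (deg 0 i)" for i
      by (cases "i = 0") (auto simp: t_def N_def deg_def x0)
    moreover have "t 0 0 = x0" by (simp add: t_def N_def)
    ultimately show ?case by simp
  next
    case (Suc n)
    have mem: "t n i \<in> G (deg n i)" for i using Suc by blast
    have a2: "d2 (t n i) = of_int (q n i) * c2 * t n i" for i using act2[OF mem] q_def by simp
    have a1: "d1 (t n i) = of_int (p n i) * c1 * t n i" for i using act1[OF mem] p_def by simp
    have step: "t (Suc n) i = (if i = 0 then 0 else d1 (t n (i - 1))) + d2 (t n i)" for i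
    proof (cases i)
      case 0
      show ?thesis unfolding 0 by (simp only: a2, simp add: t_def NS0 algebra_simps)
    next
      case (Suc i')
      show ?thesis
      proof (cases "Suc i' \<le> n")
        case True
        then have "n - i' = Suc (n - Suc i')" by simp
        then show ?thesis unfolding Suc by (simp only: a1 a2, simp add: t_def NS algebra_simps)
      next
        case False
        then have "N n (Suc i') = 0" using Nbig by simp
        then show ?thesis unfolding Suc by (simp only: a1 a2, simp add: t_def NS algebra_simps)
      qed
    qed
    have mem': "t (Suc n) i \<in> G (deg (Suc n) i)" for i
    proof (cases i)
      case 0
      then show ?thesis using step[of 0] hom2[OF mem[of 0]] degS2[of 0 n] by simp
    next
      case (Suc i')
      have m1: "d1 (t n i') \<in> G (deg (Suc n) i)" using hom1[OF mem[of i']] degS1 Suc by simp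
      have m2: "d2 (t n i) \<in> G (deg (Suc n) i)"
      proof (cases "i \<le> n")
        case True then show ?thesis using hom2[OF mem[of i]] degS2 by simp
      next
        case False then show ?thesis using tbig d2_zero by simp
      qed
      show ?thesis using step[of i] Suc G_add[OF m1 m2] by simp
    qed
    have "(Dop ^^ Suc n) x0 = Dop (\<Sum>i\<le>n. t n i)" using Suc by simp
    also have "\<dots> = (\<Sum>i\<le>n. Dop (t n i))"
      using addA_sum[OF addD, of "{..n}" "t n"] mem G_A by blast
    also have "\<dots> = (\<Sum>i\<le>n. d1 (t n i)) + (\<Sum>i\<le>n. d2 (t n i))" by (simp add: sum.distrib)
    also have "\<dots> = (\<Sum>i\<le>Suc n. t (Suc n) i)"
    proof -
      have "(\<Sum>i\<le>Suc n. t (Suc n) i) = (\<Sum>i\<le>Suc n. (if i = 0 then 0 else d1 (t n (i - 1)))) + (\<Sum>i\<le>Suc n. d2 (t n i))"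
        unfolding step by (simp add: sum.distrib)
      also have "(\<Sum>i\<le>Suc n. (if i = 0 then 0 else d1 (t n (i - 1)))) = (\<Sum>i\<le>n. d1 (t n i))"
        by (subst sum.atMost_Suc_shift) simp
      also have "(\<Sum>i\<le>Suc n. d2 (t n i)) = (\<Sum>i\<le>n. d2 (t n i))"
        using tbig[of n "Suc n"] d2_zero by simp
      finally show ?thesis by simp
    qed
    finally show ?case using mem' by blast
  qed
  have tnz: "t n i \<noteq> 0" if "N n i \<noteq> 0" for n i
    unfolding t_def using that c1nz c2nz x0(2) by simp
  have alS: "deg n i \<in> S" if "N n i \<noteq> 0" for n i
    using inS[OF _ tnz[OF that]] rep by blast
  have pq_nn: "p n i \<ge> 0" "q n i \<ge> 0" if "N n i \<noteq> 0" for n i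
    unfolding p_def q_def using pos1 pos2 alS[OF that] by auto
  have Nnn: "N n i \<ge> 0" for n i
  proof (induction n arbitrary: i)
    case 0 then show ?case unfolding N_def by simp
  next
    case (Suc n)
    have pr: "N n j * p n j \<ge> 0" "N n j * q n j \<ge> 0" for j
      using Suc pq_nn[of n j] by (cases "N n j = 0"; simp)+
    show ?case
    proof (cases i)
      case 0 then show ?thesis using NS0 pr by simp
    next
      case (Suc i') then show ?thesis using NS pr by (simp add: add_nonneg_nonneg)
    qed
  qed
  have pr: "N n j * p n j \<ge> 0" "N n j * q n j \<ge> 0" for n j
    using Nnn pq_nn[of n j] by (cases "N n j = 0"; simp)+
  have alive: "\<exists>i\<le>n. N n i > 0 \<and> (p n i \<ge> 1 \<or> q n i \<ge> 1)" for n
  proof (induction n)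
    case 0
    have "p 0 0 = \<psi>1 m0" unfolding p_def deg_def by simp
    then show ?case using m0(2) unfolding N_def by (intro exI[of _ 0]) simp
  next
    case (Suc n)
    then obtain i where i: "i \<le> n" "N n i > 0" "p n i \<ge> 1 \<or> q n i \<ge> 1" by blast
    have nn: "p n i \<ge> 0" "q n i \<ge> 0" using pq_nn i(2) by auto
    show ?case
    proof (cases "p n i \<ge> 1")
      case True
      have "N n i * p n i > 0" using i(2) True by simp
      then have "N (Suc n) (Suc i) > 0" using NS pr by (smt (verit))
      moreover have "q (Suc n) (Suc i) = q n i + \<psi>2 e1" unfolding q_def degS1 add2 by simp
      ultimately show ?thesis using i(1) nn b by (intro exI[of _ "Suc i"]) simp
    next
      case False
      then have q1: "q n i \<ge> 1" using i(3) by simp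
      have "N n i * q n i > 0" using i(2) q1 by simp
      moreover have "N (Suc n) i \<ge> N n i * q n i"
      proof (cases i)
        case 0 then show ?thesis using NS0 by simp
      next
        case (Suc i') then show ?thesis using NS pr by simp
      qed
      ultimately have "N (Suc n) i > 0" by simp
      moreover have "p (Suc n) i = p n i + \<psi>1 e2" unfolding p_def degS2[OF i(1)] add1 by simp
      ultimately show ?thesis using i(1) nn a by (intro exI[of _ i]) simp
    qed
  qed
  obtain n where n0: "(Dop ^^ n) x0 = 0" using lnd x0(1) G_A unfolding locally_nilpotent_def by blast
  have inj: "inj_on (deg n) {..n}"
  proof (rule inj_onI)
    fix i j assume ij: "i \<in> {..n}" "j \<in> {..n}" "deg n i = deg n j"
    then have "p n i = p n j" unfolding p_def by simp
    then have "int (n - i) * \<psi>1 e2 - int i = int (n - j) * \<psi>1 e2 - int j" using p_deg by simp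
    then have "(int n - int i) * \<psi>1 e2 - int i = (int n - int j) * \<psi>1 e2 - int j"
      using ij by (simp add: of_nat_diff)
    then have "(int j - int i) * (\<psi>1 e2 + 1) = 0" by (simp add: algebra_simps)
    then show "i = j" using a by simp
  qed
  have "(\<Sum>i\<le>n. t n i) = 0" using rep n0 by simp
  then have "\<forall>i\<in>{..n}. t n i = 0" using indep_inj[OF finite_atMost inj, of "t n"] rep by blast
  then show False using alive[of n] tnz by force
qed

end


context two
begin

lemma main_iff: "locally_nilpotent A Dop \<longleftrightarrow> locally_nilpotent A Cop"
proof -
  consider (n1) "\<psi>2 e1 < 0" | (n2) "\<psi>1 e2 < 0"
    | (z1) "\<psi>1 e2 = 0" "\<psi>2 e1 \<ge> 0" | (z2) "\<psi>2 e1 = 0" "\<psi>1 e2 \<ge> 0"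
    | (p) "\<psi>1 e2 \<ge> 1" "\<psi>2 e1 \<ge> 1" by linarith
  then show ?thesis
  proof cases
    case n1
    have eq: "\<psi>1 v = \<psi>2 v" for v using caseNeg[OF n1] .
    have "locally_nilpotent A Dop \<and> locally_nilpotent A Cop"
      by (rule bothLND[of \<psi>1]) (use add1 e11 e22 eq pos1 in auto)
    then show ?thesis by blast
  next
    case n2
    interpret sw: two k A G d2 d1 \<psi>2 \<psi>1 c2 c1 e2 e1 by (rule swap)
    have eq: "\<psi>1 v = \<psi>2 v" for v using sw.caseNeg[OF n2] by simp
    have "locally_nilpotent A Dop \<and> locally_nilpotent A Cop"
      by (rule bothLND[of \<psi>1]) (use add1 e11 e22 eq pos1 in auto)
    then show ?thesis by blast
  next
    case z1
    have "locally_nilpotent A Dop \<and> locally_nilpotent A Cop"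
      by (rule bothLND[of "\<lambda>v. (\<psi>2 e1 + 1) * \<psi>1 v + \<psi>2 v"])
        (use add1 add2 e11 e22 z1 pos1 pos2 in \<open>auto simp: algebra_simps\<close>)
    then show ?thesis by blast
  next
    case z2
    have "locally_nilpotent A Dop \<and> locally_nilpotent A Cop"
      by (rule bothLND[of "\<lambda>v. \<psi>1 v + (\<psi>1 e2 + 1) * \<psi>2 v"])
        (use add1 add2 e11 e22 z2 pos1 pos2 in \<open>auto simp: algebra_simps\<close>)
    then show ?thesis by blast
  next
    case p
    then show ?thesis using DnotLND CnotLND by blast
  qed
qed

end

theorem corollary6p1:
  fixes k A :: "'a::field_char_0 set" and G :: "int^'n::finite \<Rightarrow> 'a set"
    and d1 d2 :: "'a \<Rightarrow> 'a"
  assumes "normal_affine_torus_algebra k A G"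
    and "homogeneous_LND_fiber_type k A G d1" and "\<exists>a\<in>A. d1 a \<noteq> 0"
    and "homogeneous_LND_fiber_type k A G d2" and "\<exists>a\<in>A. d2 a \<noteq> 0"
  shows "locally_nilpotent A (\<lambda>x. d1 x + d2 x) \<longleftrightarrow>
         locally_nilpotent A (\<lambda>x. d1 (d2 x) - d2 (d1 x))"
proof -
  interpret tor k A G by (rule tor.intro) (rule assms(1))
  from struct_lemma[OF assms(2,3)] obtain \<psi>1 c1 e1 where
    h1: "c1 \<noteq> 0 \<and> (\<forall>u v. \<psi>1 (u + v) = \<psi>1 u + \<psi>1 v) \<and> \<psi>1 e1 = -1 \<and>
     (\<forall>m\<in>S. \<psi>1 m \<ge> 0) \<and> (\<exists>m\<in>S. \<psi>1 m > 0) \<and>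
     (\<forall>m. \<forall>x\<in>G m. d1 x = of_int (\<psi>1 m) * c1 * x) \<and> (\<forall>m. \<forall>x\<in>G m. d1 x \<in> G (m + e1))"
    by blast
  from struct_lemma[OF assms(4,5)] obtain \<psi>2 c2 e2 where
    h2: "c2 \<noteq> 0 \<and> (\<forall>u v. \<psi>2 (u + v) = \<psi>2 u + \<psi>2 v) \<and> \<psi>2 e2 = -1 \<and>
     (\<forall>m\<in>S. \<psi>2 m \<ge> 0) \<and> (\<exists>m\<in>S. \<psi>2 m > 0) \<and>
     (\<forall>m. \<forall>x\<in>G m. d2 x = of_int (\<psi>2 m) * c2 * x) \<and> (\<forall>m. \<forall>x\<in>G m. d2 x \<in> G (m + e2))"
    by blast
  from h1 have a1: "c1 \<noteq> 0" "\<And>u v. \<psi>1 (u + v) = \<psi>1 u + \<psi>1 v" "\<psi>1 e1 = -1"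
     "\<And>m. m \<in> Sw G \<Longrightarrow> \<psi>1 m \<ge> 0" "\<exists>m\<in>Sw G. \<psi>1 m > 0"
     "\<And>m x. x \<in> G m \<Longrightarrow> d1 x = of_int (\<psi>1 m) * c1 * x" "\<And>m x. x \<in> G m \<Longrightarrow> d1 x \<in> G (m + e1)"
    by (elim conjE; blast)+
  from h2 have a2: "c2 \<noteq> 0" "\<And>u v. \<psi>2 (u + v) = \<psi>2 u + \<psi>2 v" "\<psi>2 e2 = -1"
     "\<And>m. m \<in> Sw G \<Longrightarrow> \<psi>2 m \<ge> 0" "\<exists>m\<in>Sw G. \<psi>2 m > 0"
     "\<And>m x. x \<in> G m \<Longrightarrow> d2 x = of_int (\<psi>2 m) * c2 * x" "\<And>m x. x \<in> G m \<Longrightarrow> d2 x \<in> G (m + e2)"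
    by (elim conjE; blast)+
  have der: "addA A d1" "addA A d2"
    using assms(2,4) addA_der unfolding homogeneous_LND_fiber_type_def by blast+
  interpret two k A G d1 d2 \<psi>1 \<psi>2 c1 c2 e1 e2
    by (rule two.intro[OF tor_axioms two_axioms.intro[OF a1(1) a2(1) a1(2) a2(2) a1(3) a2(3) a1(4) a2(4)
          a1(5) a2(5) a1(6) a2(6) a1(7) a2(7) der(1) der(2)]])
  show ?thesis by (rule main_iff)
qed


end
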